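(* Assume $\operatorname{char}\widetilde K\neq2,3$. Let $A,B,C,D\in\mathbb{Z}[\alpha_1,\dots,\alpha_6]$ be the polynomials defined below (with $u=1$). Let $\omega=(\omega_1,\dots,\omega_6)\in\mathbb{R}^6$ satisfy $\omega_1<\omega_2<\omega_3<\omega_4<\omega_5<\omega_6$ (a weight vector in the relative interior of a Type (I) cell). Then $$\operatorname{in}_\omega(A)=6\alpha_4^2\alpha_5^2\alpha_6^2,\quad \operatorname{in}_\omega(B)=4\alpha_3^2\alpha_4^2\alpha_5^4\alpha_6^4,\quad \operatorname{in}_\omega(C)=8\alpha_3^2\alpha_4^4\alpha_5^6\alpha_6^6,\quad \operatorname{in}_\omega(D)=\alpha_2^2\alpha_3^4\alpha_4^6\alpha_5^8\alpha_6^{10}.$$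
   Context: Here $\widetilde K$ is the residue field of the underlying non-Archimedean field. Set $\Delta_{ij}=(\alpha_i-\alpha_j)^2$. $A=\sum\Delta_{ij}\Delta_{kl}\Delta_{mn}$ over the 15 partitions $\{\{i,j\},\{k,l\},\{m,n\}\}$ of $\{1,\dots,6\}$ into pairs; $B=\sum(\Delta_{ij}\Delta_{jk}\Delta_{ki})(\Delta_{lm}\Delta_{mn}\Delta_{nl})$ over the 10 partitions $\{\{i,j,k\},\{l,m,n\}\}$ into two triples; $C=\sum(\Delta_{ij}\Delta_{jk}\Delta_{ki})(\Delta_{lm}\Delta_{mn}\Delta_{nl})(\Delta_{il}\Delta_{jm}\Delta_{kn})$ over the 60 choices of a partition into two triples $\{i,j,k\},\{l,m,n\}$ together with a bijective pairing $\{\{i,l\},\{j,m\},\{k,n\}\}$ between them; $D=\prod_{i<j}\Delta_{ij}$. For a polynomial $P$ and $\omega\in\mathbb{R}^6$, $\operatorname{in}_\omega(P)$ is the sum of the terms $c\,\alpha^m$ of $P$ for which $\langle\omega,m\rangle$ is maximal. *)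

theory Defs
  imports "HOL-Library.Poly_Mapping" Complex_Main
begin

text \<open>Multivariate polynomials in the variables alpha_1, ..., alpha_6 with coefficients
in a type 'a: finitely supported maps from monomials (exponent vectors, finitely
supported maps nat to nat) to coefficients.\<close>

type_synonym 'a mpoly = "(nat \<Rightarrow>\<^sub>0 nat) \<Rightarrow>\<^sub>0 'a"

definition Var :: "nat \<Rightarrow> 'a::comm_ring_1 mpoly" where
  "Var i = Poly_Mapping.single (Poly_Mapping.single i 1) 1"

definition Delta :: "nat set \<Rightarrow> 'a::comm_ring_1 mpoly" where
  "Delta b = (Var (Min b) - Var (Max b))^2"

definition Idx :: "nat set" where "Idx = {1..6}"

definition block_partitions :: "nat \<Rightarrow> nat set set set" where
  "block_partitions k = {P. \<Union>P = Idx \<and> (\<forall>b\<in>P. card b = k)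
                          \<and> (\<forall>b\<in>P. \<forall>c\<in>P. b \<noteq> c \<longrightarrow> b \<inter> c = {})}"

definition pair_partitions :: "nat set set set" where
  "pair_partitions = block_partitions 2"

definition triple_partitions :: "nat set set set" where
  "triple_partitions = block_partitions 3"

definition triDelta :: "nat set \<Rightarrow> 'a::comm_ring_1 mpoly" where
  "triDelta T = (\<Prod>b\<in>{b. b \<subseteq> T \<and> card b = 2}. Delta b)"

text \<open>Bijective pairings between the two triples of a triple partition P:
  pair partitions of {1..6} each of whose pairs meets every triple of P in one element.\<close>
definition pairings :: "nat set set \<Rightarrow> nat set set set" where
  "pairings P = {M \<in> pair_partitions. \<forall>m\<in>M. \<forall>T\<in>P. card (m \<inter> T) = 1}"

definition polyA :: "'a::comm_ring_1 mpoly" where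
  "polyA = (\<Sum>P\<in>pair_partitions. \<Prod>b\<in>P. Delta b)"

definition polyB :: "'a::comm_ring_1 mpoly" where
  "polyB = (\<Sum>P\<in>triple_partitions. \<Prod>T\<in>P. triDelta T)"

definition polyC :: "'a::comm_ring_1 mpoly" where
  "polyC = (\<Sum>P\<in>triple_partitions. \<Sum>M\<in>pairings P.
              (\<Prod>T\<in>P. triDelta T) * (\<Prod>b\<in>M. Delta b))"

definition polyD :: "'a::comm_ring_1 mpoly" where
  "polyD = (\<Prod>b\<in>{b. b \<subseteq> Idx \<and> card b = 2}. Delta b)"

definition wt :: "(nat \<Rightarrow> real) \<Rightarrow> (nat \<Rightarrow>\<^sub>0 nat) \<Rightarrow> real" where
  "wt \<omega> m = (\<Sum>i\<in>Poly_Mapping.keys m. \<omega> i * real (Poly_Mapping.lookup m i))"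

definition initial_form :: "(nat \<Rightarrow> real) \<Rightarrow> 'a::comm_ring_1 mpoly \<Rightarrow> 'a mpoly" where
  "initial_form \<omega> P = Abs_poly_mapping (\<lambda>m.
      if m \<in> Poly_Mapping.keys P \<and> wt \<omega> m = Max (wt \<omega> ` Poly_Mapping.keys P) then Poly_Mapping.lookup P m else 0)"

end

theory Submission
  imports Defs
begin


lemma wt_superset:
  assumes "finite S" "Poly_Mapping.keys m \<subseteq> S"
  shows "wt \<omega> m = (\<Sum>i\<in>S. \<omega> i * real (Poly_Mapping.lookup m i))"
  unfolding wt_def
  by (rule sum.mono_neutral_left) (use assms in \<open>auto simp: in_keys_iff\<close>)

lemma wt_add: "wt \<omega> (a + b) = wt \<omega> a + wt \<omega> b"
proof -
  let ?S = "Poly_Mapping.keys a \<union> Poly_Mapping.keys b"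
  have f: "finite ?S" by simp
  have "wt \<omega> (a + b) = (\<Sum>i\<in>?S. \<omega> i * real (Poly_Mapping.lookup (a+b) i))"
    by (rule wt_superset[OF f]) (rule keys_add)
  also have "\<dots> = (\<Sum>i\<in>?S. \<omega> i * real (Poly_Mapping.lookup a i)) + (\<Sum>i\<in>?S. \<omega> i * real (Poly_Mapping.lookup b i))"
    by (simp add: lookup_add algebra_simps sum.distrib)
  also have "\<dots> = wt \<omega> a + wt \<omega> b"
    by (simp add: wt_superset[OF f, symmetric])
  finally show ?thesis .
qed

lemma wt_single: "wt \<omega> (Poly_Mapping.single i n) = \<omega> i * real n"
  unfolding wt_def by auto

lemma wt_zero[simp]: "wt \<omega> 0 = 0" unfolding wt_def by simp

definition below :: "(nat \<Rightarrow> real) \<Rightarrow> 'a::comm_ring_1 mpoly \<Rightarrow> real \<Rightarrow> bool" where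
  "below \<omega> p w \<longleftrightarrow> (\<forall>k\<in>Poly_Mapping.keys p. wt \<omega> k < w)"

definition upb :: "(nat \<Rightarrow> real) \<Rightarrow> 'a::comm_ring_1 mpoly \<Rightarrow> real \<Rightarrow> bool" where
  "upb \<omega> p w \<longleftrightarrow> (\<forall>k\<in>Poly_Mapping.keys p. wt \<omega> k \<le> w)"

lemma below_upb: "below \<omega> p w \<Longrightarrow> upb \<omega> p w"
  unfolding below_def upb_def by (simp add: less_imp_le)

lemma below_add: "below \<omega> p w \<Longrightarrow> below \<omega> q w \<Longrightarrow> below \<omega> (p + q) w"
  unfolding below_def using keys_add[of p q] by (meson UnE subsetD)

lemma below_mono: "below \<omega> p w \<Longrightarrow> w \<le> w' \<Longrightarrow> below \<omega> p w'"
  unfolding below_def by fastforce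

lemma below_zero[simp]: "below \<omega> 0 w" unfolding below_def by simp

lemma below_single: "wt \<omega> m < w \<Longrightarrow> below \<omega> (Poly_Mapping.single m c) w"
  unfolding below_def by simp

lemma upb_single: "upb \<omega> (Poly_Mapping.single m c) (wt \<omega> m)"
  unfolding upb_def by simp

lemma below_mult1:
  assumes a: "below \<omega> p w1" "upb \<omega> q w2" shows "below \<omega> (p * q) (w1 + w2)"
  unfolding below_def
proof
  fix k assume k: "k \<in> Poly_Mapping.keys (p * q)"
  then obtain x y where xy: "k = x + y" "x \<in> Poly_Mapping.keys p" "y \<in> Poly_Mapping.keys q"
    using keys_mult[of p q] by blast
  have "wt \<omega> x < w1" using a(1) xy(2) unfolding below_def by blast
  moreover have "wt \<omega> y \<le> w2" using a(2) xy(3) unfolding upb_def by blast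
  ultimately show "wt \<omega> k < w1 + w2" by (simp add: xy(1) wt_add)
qed

lemma below_mult2: "upb \<omega> p w1 \<Longrightarrow> below \<omega> q w2 \<Longrightarrow> below \<omega> (p * q) (w1 + w2)"
  using below_mult1[of \<omega> q w2 p w1] by (simp add: mult.commute add.commute)

definition LT :: "(nat \<Rightarrow> real) \<Rightarrow> 'a::comm_ring_1 mpoly \<Rightarrow> (nat \<Rightarrow>\<^sub>0 nat) \<Rightarrow> 'a \<Rightarrow> bool" where
  "LT \<omega> p m c \<longleftrightarrow> (\<exists>p'. p = Poly_Mapping.single m c + p' \<and> below \<omega> p' (wt \<omega> m))"

lemma LT_mult:
  assumes "LT \<omega> p m c" "LT \<omega> q n d"
  shows "LT \<omega> (p * q) (m + n) (c * d)"
proof -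
  obtain p' where p: "p = Poly_Mapping.single m c + p'" "below \<omega> p' (wt \<omega> m)" using assms(1) LT_def by blast
  obtain q' where q: "q = Poly_Mapping.single n d + q'" "below \<omega> q' (wt \<omega> n)" using assms(2) LT_def by blast
  have "p * q = Poly_Mapping.single (m + n) (c * d) + (Poly_Mapping.single m c * q' + p' * Poly_Mapping.single n d + p' * q')"
    by (simp add: p q algebra_simps mult_single)
  moreover have "below \<omega> (Poly_Mapping.single m c * q' + p' * Poly_Mapping.single n d + p' * q') (wt \<omega> (m + n))"
    unfolding wt_add
    by (intro below_add below_mult1 below_mult2 upb_single p q below_upb)
  ultimately show ?thesis unfolding LT_def by blast
qed

lemma LT_step:
  assumes "LT \<omega> p m c" "m \<noteq> t \<longrightarrow> wt \<omega> m < wt \<omega> t" "LT \<omega> q t d"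
  shows "LT \<omega> (p + q) t ((if m = t then c else 0) + d)"
proof -
  obtain p' where p: "p = Poly_Mapping.single m c + p'" "below \<omega> p' (wt \<omega> m)" using assms(1) LT_def by blast
  obtain q' where q: "q = Poly_Mapping.single t d + q'" "below \<omega> q' (wt \<omega> t)" using assms(3) LT_def by blast
  show ?thesis
  proof (cases "m = t")
    case True
    have "p + q = Poly_Mapping.single t (c + d) + (p' + q')"
      by (simp add: p q True single_add algebra_simps)
    moreover have "below \<omega> (p' + q') (wt \<omega> t)" using p q True by (intro below_add) auto
    ultimately show ?thesis using True unfolding LT_def by auto
  next
    case False
    then have lt: "wt \<omega> m < wt \<omega> t" using assms(2) by auto
    have "p + q = Poly_Mapping.single t d + (Poly_Mapping.single m c + p' + q')"
      by (simp add: p q algebra_simps)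
    moreover have "below \<omega> (Poly_Mapping.single m c + p' + q') (wt \<omega> t)"
      using p q lt by (intro below_add below_single) (auto intro: below_mono)
    ultimately show ?thesis using False unfolding LT_def by auto
  qed
qed

lemma LT_zero: "LT \<omega> 0 t 0" unfolding LT_def by simp

lemma LT_last:
  assumes "LT \<omega> p m c" "m \<noteq> t \<longrightarrow> wt \<omega> m < wt \<omega> t"
  shows "LT \<omega> p t (if m = t then c else 0)"
  using LT_step[OF assms LT_zero] by simp

lemma LT_initial:
  assumes "LT \<omega> p m c" "c \<noteq> 0"
  shows "initial_form \<omega> p = Poly_Mapping.single m c"
proof -
  obtain p' where p: "p = Poly_Mapping.single m c + p'" "below \<omega> p' (wt \<omega> m)" using assms(1) LT_def by blast
  have m': "m \<notin> Poly_Mapping.keys p'" using p(2) unfolding below_def by auto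
  have lk: "Poly_Mapping.lookup p k = (if k = m then c else Poly_Mapping.lookup p' k)" for k
    using m' by (simp add: p lookup_add lookup_single in_keys_iff)
  have mk: "m \<in> Poly_Mapping.keys p" using assms(2) lk by (simp add: in_keys_iff)
  have other: "k \<in> Poly_Mapping.keys p \<Longrightarrow> k \<noteq> m \<Longrightarrow> wt \<omega> k < wt \<omega> m" for k
    using p(2) lk unfolding below_def by (auto simp: in_keys_iff)
  have mx: "Max (wt \<omega> ` Poly_Mapping.keys p) = wt \<omega> m"
    by (rule Max_eqI) (use mk other in \<open>force+\<close>)
  have "(\<lambda>k. if k \<in> Poly_Mapping.keys p \<and> wt \<omega> k = Max (wt \<omega> ` Poly_Mapping.keys p) then Poly_Mapping.lookup p k else 0)
      = Poly_Mapping.lookup (Poly_Mapping.single m c)"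
  proof
    fix k show "(if k \<in> Poly_Mapping.keys p \<and> wt \<omega> k = Max (wt \<omega> ` Poly_Mapping.keys p) then Poly_Mapping.lookup p k else 0)
      = Poly_Mapping.lookup (Poly_Mapping.single m c) k"
      using mx mk other[of k] lk[of k] by (auto simp: lookup_single)
  qed
  then show ?thesis unfolding initial_form_def by simp
qed



fun monf :: "nat \<Rightarrow> nat list \<Rightarrow> (nat \<Rightarrow>\<^sub>0 nat)" where
  "monf n [] = 0"
| "monf n (x # xs) = Poly_Mapping.single n x + monf (n + 1) xs"

fun wtl :: "(nat \<Rightarrow> real) \<Rightarrow> nat \<Rightarrow> nat list \<Rightarrow> real" where
  "wtl \<omega> n [] = 0"
| "wtl \<omega> n (x # xs) = \<omega> n * real x + wtl \<omega> (n + 1) xs"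

lemma wt_monf: "wt \<omega> (monf n v) = wtl \<omega> n v"
  by (induction v arbitrary: n) (simp_all add: wt_add wt_single)

lemma monf_add: "length v = length w \<Longrightarrow> monf n (map2 (+) v w) = monf n v + monf n w"
proof (induction v arbitrary: n w)
  case Nil then show ?case by simp
next
  case (Cons a v)
  then obtain b w' where w: "w = b # w'" by (cases w) auto
  with Cons show ?case by (simp add: single_add algebra_simps)
qed

lemma lookup_monf: "Poly_Mapping.lookup (monf n v) i = (if n \<le> i \<and> i < n + length v then v ! (i - n) else 0)"
proof (induction v arbitrary: n)
  case Nil then show ?case by simp
next
  case (Cons a v)
  show ?case
  proof (cases "i = n")
    case True then show ?thesis using Cons by (simp add: lookup_add lookup_single)
  next
    case False
    then show ?thesis using Cons
      by (auto simp: lookup_add lookup_single when_def nth_Cons' Suc_diff_Suc)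
  qed
qed

lemma monf_unit: "j < 7 \<Longrightarrow> monf 0 ((replicate 7 0)[j := 2]) = Poly_Mapping.single j 2"
  by (rule poly_mapping_eqI) (auto simp: lookup_monf lookup_single when_def nth_list_update)

lemma Var_mult: "Var i * Var j = Poly_Mapping.single (Poly_Mapping.single i 1 + Poly_Mapping.single j 1) 1"
  unfolding Var_def by (simp add: mult_single)

lemma LT_Delta:
  fixes \<omega> :: "nat \<Rightarrow> real"
  assumes "i < j" "\<omega> i < \<omega> j"
  shows "LT \<omega> (Delta {i, j} :: 'a::comm_ring_1 mpoly) (Poly_Mapping.single j 2) 1"
proof -
  have mm: "Min {i, j} = i" "Max {i, j} = j" using assms by auto
  have e: "(Var i - Var j)^2 = Var j * Var j + (Var i * Var i - 2 * (Var i * Var j) :: 'a mpoly)"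
    by (simp add: power2_eq_square algebra_simps)
  have two: "(2::'a mpoly) * Poly_Mapping.single m 1 = Poly_Mapping.single m 2" for m
    by (simp add: single_numeral[symmetric] mult_single del: single_numeral)
  have jj: "Poly_Mapping.single j (1::nat) + Poly_Mapping.single j 1 = Poly_Mapping.single j 2"
    by (metis one_add_one single_add)
  have ii: "Poly_Mapping.single i (1::nat) + Poly_Mapping.single i 1 = Poly_Mapping.single i 2"
    by (metis one_add_one single_add)
  have D: "(Delta {i, j} :: 'a mpoly) = Poly_Mapping.single (Poly_Mapping.single j 2) 1 +
     (Poly_Mapping.single (Poly_Mapping.single i 2) 1 + - Poly_Mapping.single (Poly_Mapping.single i 1 + Poly_Mapping.single j 1) 2)"
    unfolding Delta_def mm e Var_mult two jj ii by simp
  have b1: "below \<omega> (Poly_Mapping.single (Poly_Mapping.single i 2) (1::'a)) (wt \<omega> (Poly_Mapping.single j 2))"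
    using assms by (intro below_single) (simp add: wt_single)
  have b2: "below \<omega> (- Poly_Mapping.single (Poly_Mapping.single i 1 + Poly_Mapping.single j 1) (2::'a)) (wt \<omega> (Poly_Mapping.single j 2))"
    using assms unfolding below_def by (simp add: wt_single wt_add)
  show ?thesis unfolding LT_def using D below_add[OF b1 b2] by blast
qed

definition LEAD :: "(nat \<Rightarrow> real) \<Rightarrow> 'a::comm_ring_1 mpoly \<Rightarrow> nat list \<Rightarrow> 'a \<Rightarrow> bool" where
  "LEAD \<omega> p v c \<longleftrightarrow> LT \<omega> p (monf 0 v) c"

definition TOT :: "(nat \<Rightarrow> real) \<Rightarrow> 'a::comm_ring_1 mpoly \<Rightarrow> nat list \<Rightarrow> 'a \<Rightarrow> bool" where
  "TOT \<omega> p v c \<longleftrightarrow> LT \<omega> p (monf 0 v) c"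

lemma wtl7: "wtl \<omega> 0 [a0,a1,a2,a3,a4,a5,a6] = \<omega> 0 * real a0 + \<omega> 1 * real a1 + \<omega> 2 * real a2 + \<omega> 3 * real a3 + \<omega> 4 * real a4 + \<omega> 5 * real a5 + \<omega> 6 * real a6"
  by (simp add: numeral_eq_Suc)

lemma LEAD_mult: "LEAD \<omega> p v c \<Longrightarrow> LEAD \<omega> q w d \<Longrightarrow> length v = length w \<Longrightarrow> LEAD \<omega> (p * q) (map2 (+) v w) (c * d)"
  unfolding LEAD_def by (simp add: monf_add LT_mult)

definition uv :: "nat \<Rightarrow> nat list" where
  "uv j = [if j = 0 then 2 else 0, if j = 1 then 2 else 0, if j = 2 then 2 else 0, if j = 3 then 2 else 0,
           if j = 4 then 2 else 0, if j = 5 then 2 else 0, if j = 6 then 2 else 0]"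

lemma uv_eq: "j < 7 \<Longrightarrow> uv j = (replicate 7 0)[j := 2]"
proof -
  assume "j < 7"
  then have "j = 0 \<or> j = 1 \<or> j = 2 \<or> j = 3 \<or> j = 4 \<or> j = 5 \<or> j = 6" by linarith
  then show ?thesis unfolding uv_def by (elim disjE) (simp_all add: numeral_eq_Suc)
qed

lemma LEAD_Delta: "i < j \<Longrightarrow> j < 7 \<Longrightarrow> \<omega> i < \<omega> j \<Longrightarrow> LEAD \<omega> (Delta {i, j}) (uv j) 1"
  unfolding LEAD_def by (simp add: uv_eq monf_unit LT_Delta)

lemma TOT_step:
  assumes "LEAD \<omega> p v c" "v \<noteq> t \<longrightarrow> wtl \<omega> 0 v < wtl \<omega> 0 t" "TOT \<omega> q t d"
  shows "TOT \<omega> (p + q) t ((if v = t then c else 0) + d)"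
proof -
  have c: "monf 0 v \<noteq> monf 0 t \<longrightarrow> wt \<omega> (monf 0 v) < wt \<omega> (monf 0 t)"
    using assms(2) by (auto simp: wt_monf)
  have "(if monf 0 v = monf 0 t then c else 0) = (if v = t then c else 0)"
    using assms(2) by (metis less_irrefl wt_monf)
  then show ?thesis using LT_step[OF assms(1)[unfolded LEAD_def] c assms(3)[unfolded TOT_def]]
    unfolding TOT_def by simp
qed

lemma TOT_last:
  assumes "LEAD \<omega> p v c" "v \<noteq> t \<longrightarrow> wtl \<omega> 0 v < wtl \<omega> 0 t"
  shows "TOT \<omega> p t (if v = t then c else 0)"
proof -
  have c: "monf 0 v \<noteq> monf 0 t \<longrightarrow> wt \<omega> (monf 0 v) < wt \<omega> (monf 0 t)"
    using assms(2) by (auto simp: wt_monf)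
  have "(if monf 0 v = monf 0 t then c else 0) = (if v = t then c else 0)"
    using assms(2) by (metis less_irrefl wt_monf)
  then show ?thesis using LT_last[OF assms(1)[unfolded LEAD_def] c]
    unfolding TOT_def by simp
qed

lemma TOT_cong: "TOT \<omega> p t c \<Longrightarrow> c = c' \<Longrightarrow> TOT \<omega> p t c'" by simp

lemma TOT_initial: "TOT \<omega> p t c \<Longrightarrow> c \<noteq> 0 \<Longrightarrow> initial_form \<omega> p = Poly_Mapping.single (monf 0 t) c"
  unfolding TOT_def by (rule LT_initial)



definition parts :: "nat \<Rightarrow> nat set \<Rightarrow> nat set set set" where
  "parts k X = {P. \<Union>P = X \<and> (\<forall>b\<in>P. card b = k) \<and> (\<forall>b\<in>P. \<forall>c\<in>P. b \<noteq> c \<longrightarrow> b \<inter> c = {})}"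

definition Ssub :: "nat \<Rightarrow> nat set \<Rightarrow> nat set set" where
  "Ssub k X = {c. c \<subseteq> X \<and> card c = k}"

lemma finite_parts: "finite X \<Longrightarrow> finite (parts k X)"
proof -
  assume f: "finite X"
  have "parts k X \<subseteq> Pow (Pow X)" unfolding parts_def by auto
  then show ?thesis using f by (meson finite_Pow_iff finite_subset)
qed

lemma parts_finite_elem: "P \<in> parts k X \<Longrightarrow> finite X \<Longrightarrow> finite P"
  unfolding parts_def using finite_UnionD by blast

lemma parts_empty: "parts (Suc k) {} = {{}}"
proof -
  have "P = {}" if "P \<in> parts (Suc k) {}" for P
  proof -
    have "\<forall>b\<in>P. b = {}" "\<forall>b\<in>P. card b = Suc k" using that unfolding parts_def by auto
    then show ?thesis by (metis card.empty ex_in_conv nat.distinct(1))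
  qed
  moreover have "{} \<in> parts (Suc k) {}" unfolding parts_def by auto
  ultimately show ?thesis by blast
qed

lemma parts_insert:
  assumes x: "x \<notin> X" and fX: "finite X"
  shows "parts (Suc k) (insert x X) = (\<Union>c\<in>Ssub k X. insert (insert x c) ` parts (Suc k) (X - c))"
proof
  show "parts (Suc k) (insert x X) \<subseteq> (\<Union>c\<in>Ssub k X. insert (insert x c) ` parts (Suc k) (X - c))"
  proof
    fix P assume P: "P \<in> parts (Suc k) (insert x X)"
    then have U: "\<Union>P = insert x X" and cardP: "\<forall>b\<in>P. card b = Suc k"
      and dis: "\<forall>b\<in>P. \<forall>c\<in>P. b \<noteq> c \<longrightarrow> b \<inter> c = {}" unfolding parts_def by auto
    obtain b where b: "b \<in> P" "x \<in> b" using U by auto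
    define c where "c = b - {x}"
    have fb: "finite b" using cardP b(1) by (metis card.infinite nat.distinct(1))
    have bsub: "b \<subseteq> insert x X" using U b(1) by auto
    have cX: "c \<subseteq> X" using bsub c_def by auto
    have cc: "card c = k" using cardP b fb c_def by simp
    have bc: "b = insert x c" using b(2) c_def by auto
    have "P - {b} \<in> parts (Suc k) (X - c)"
      unfolding parts_def
    proof (intro CollectI conjI)
      show "\<Union>(P - {b}) = X - c"
      proof
        show "\<Union>(P - {b}) \<subseteq> X - c"
        proof
          fix y assume "y \<in> \<Union>(P - {b})"
          then obtain d where d: "d \<in> P" "d \<noteq> b" "y \<in> d" by auto
          then have "y \<notin> b" using dis b(1) by blast
          moreover have "y \<in> insert x X" using U d by auto
          ultimately show "y \<in> X - c" using bc by auto
        qed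
        show "X - c \<subseteq> \<Union>(P - {b})"
        proof
          fix y assume y: "y \<in> X - c"
          then have "y \<in> \<Union>P" using U by auto
          then obtain d where d: "d \<in> P" "y \<in> d" by auto
          have "y \<notin> b" using y x bc by auto
          then have "d \<noteq> b" using d by auto
          then show "y \<in> \<Union>(P - {b})" using d by auto
        qed
      qed
    qed (use cardP dis in auto)
    moreover have "P = insert (insert x c) (P - {b})" using b(1) bc by auto
    moreover have "c \<in> Ssub k X" unfolding Ssub_def using cX cc by auto
    ultimately show "P \<in> (\<Union>c\<in>Ssub k X. insert (insert x c) ` parts (Suc k) (X - c))" by blast
  qed
next
  show "(\<Union>c\<in>Ssub k X. insert (insert x c) ` parts (Suc k) (X - c)) \<subseteq> parts (Suc k) (insert x X)"
  proof
    fix P assume "P \<in> (\<Union>c\<in>Ssub k X. insert (insert x c) ` parts (Suc k) (X - c))"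
    then obtain c P' where c: "c \<in> Ssub k X" and P': "P' \<in> parts (Suc k) (X - c)" and P: "P = insert (insert x c) P'"
      by auto
    have cX: "c \<subseteq> X" "card c = k" using c unfolding Ssub_def by auto
    have fc: "finite c" using cX fX finite_subset by blast
    have xc: "x \<notin> c" using cX x by auto
    have U': "\<Union>P' = X - c" and card': "\<forall>b\<in>P'. card b = Suc k"
      and dis': "\<forall>b\<in>P'. \<forall>d\<in>P'. b \<noteq> d \<longrightarrow> b \<inter> d = {}" using P' unfolding parts_def by auto
    have sub: "\<And>d. d \<in> P' \<Longrightarrow> d \<subseteq> X - c" using U' by auto
    show "P \<in> parts (Suc k) (insert x X)"
      unfolding parts_def
    proof (intro CollectI conjI)
      show "\<Union>P = insert x X" using P U' cX by auto
      show "\<forall>b\<in>P. card b = Suc k" using P card' cX fc xc by auto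
      show "\<forall>b\<in>P. \<forall>d\<in>P. b \<noteq> d \<longrightarrow> b \<inter> d = {}"
      proof (intro ballI impI)
        fix b d assume bd: "b \<in> P" "d \<in> P" "b \<noteq> d"
        have aux: "e \<in> P' \<Longrightarrow> insert x c \<inter> e = {}" for e using sub[of e] x by auto
        show "b \<inter> d = {}"
          using bd P dis' aux by (auto dest: aux)
      qed
    qed
  qed
qed

lemma parts_sum:
  fixes g :: "nat set set \<Rightarrow> 'b::comm_monoid_add"
  assumes x: "x \<notin> X" and fX: "finite X"
  shows "(\<Sum>P\<in>parts (Suc k) (insert x X). g P) =
    (\<Sum>c\<in>Ssub k X. \<Sum>P'\<in>parts (Suc k) (X - c). g (insert (insert x c) P'))"
proof -
  have fS: "finite (Ssub k X)" unfolding Ssub_def using fX by simp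
  have notin: "insert x c \<notin> P'" if "c \<in> Ssub k X" "P' \<in> parts (Suc k) (X - c)" for c P'
    using that x unfolding parts_def by auto
  have "(\<Sum>P\<in>parts (Suc k) (insert x X). g P) =
    (\<Sum>c\<in>Ssub k X. \<Sum>P\<in>insert (insert x c) ` parts (Suc k) (X - c). g P)"
    unfolding parts_insert[OF x fX]
  proof (rule sum.UNION_disjoint)
    show "finite (Ssub k X)" by (rule fS)
    show "\<forall>c\<in>Ssub k X. finite (insert (insert x c) ` parts (Suc k) (X - c))"
      using fX by (simp add: finite_parts)
    show "\<forall>c1\<in>Ssub k X. \<forall>c2\<in>Ssub k X. c1 \<noteq> c2 \<longrightarrow>
      insert (insert x c1) ` parts (Suc k) (X - c1) \<inter> insert (insert x c2) ` parts (Suc k) (X - c2) = {}"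
    proof (intro ballI impI)
      fix c1 c2 assume c: "c1 \<in> Ssub k X" "c2 \<in> Ssub k X" "c1 \<noteq> c2"
      show "insert (insert x c1) ` parts (Suc k) (X - c1) \<inter> insert (insert x c2) ` parts (Suc k) (X - c2) = {}"
      proof (rule ccontr)
        assume "\<not> ?thesis"
        then obtain P1 P2 where P: "P1 \<in> parts (Suc k) (X - c1)" "P2 \<in> parts (Suc k) (X - c2)"
          "insert (insert x c1) P1 = insert (insert x c2) P2" by blast
        have n1: "\<forall>d\<in>P1. x \<notin> d" using P(1) x unfolding parts_def by auto
        have n2: "\<forall>d\<in>P2. x \<notin> d" using P(2) x unfolding parts_def by auto
        have "insert x c1 \<in> insert (insert x c2) P2" using P(3) by blast
        then have "insert x c1 = insert x c2" using n2 by auto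
        moreover have "x \<notin> c1" "x \<notin> c2" using c x unfolding Ssub_def by auto
        ultimately have "c1 = c2" by (metis Diff_insert_absorb)
        then show False using c by simp
      qed
    qed
  qed
  also have "\<dots> = (\<Sum>c\<in>Ssub k X. \<Sum>P'\<in>parts (Suc k) (X - c). g (insert (insert x c) P'))"
  proof (rule sum.cong[OF refl])
    fix c assume c: "c \<in> Ssub k X"
    have "inj_on (insert (insert x c)) (parts (Suc k) (X - c))"
    proof (rule inj_onI)
      fix P1 P2 assume "P1 \<in> parts (Suc k) (X - c)" "P2 \<in> parts (Suc k) (X - c)"
        "insert (insert x c) P1 = insert (insert x c) P2"
      then show "P1 = P2" using notin[OF c] by (metis insert_ident)
    qed
    then show "(\<Sum>P\<in>insert (insert x c) ` parts (Suc k) (X - c). g P) =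
      (\<Sum>P'\<in>parts (Suc k) (X - c). g (insert (insert x c) P'))"
      by (simp add: sum.reindex)
  qed
  finally show ?thesis .
qed

lemma parts_sum_prodG:
  fixes h :: "nat set \<Rightarrow> 'b::comm_semiring_1" and G :: "nat set set \<Rightarrow> 'b"
  assumes x: "x \<notin> X" and fX: "finite X"
  shows "(\<Sum>P\<in>parts (Suc k) (insert x X). (\<Prod>b\<in>P. h b) * G P) =
    (\<Sum>c\<in>Ssub k X. h (insert x c) * (\<Sum>P'\<in>parts (Suc k) (X - c). (\<Prod>b\<in>P'. h b) * G (insert (insert x c) P')))"
  unfolding parts_sum[OF x fX]
proof (rule sum.cong[OF refl])
  fix c assume c: "c \<in> Ssub k X"
  show "(\<Sum>P'\<in>parts (Suc k) (X - c). (\<Prod>b\<in>insert (insert x c) P'. h b) * G (insert (insert x c) P')) =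
        h (insert x c) * (\<Sum>P'\<in>parts (Suc k) (X - c). (\<Prod>b\<in>P'. h b) * G (insert (insert x c) P'))"
    unfolding sum_distrib_left
  proof (rule sum.cong[OF refl])
    fix P' assume P': "P' \<in> parts (Suc k) (X - c)"
    have "insert x c \<notin> P'" using P' x unfolding parts_def by auto
    moreover have "finite P'" by (rule parts_finite_elem[OF P']) (use fX in auto)
    ultimately show "(\<Prod>b\<in>insert (insert x c) P'. h b) * G (insert (insert x c) P') =
       h (insert x c) * ((\<Prod>b\<in>P'. h b) * G (insert (insert x c) P'))"
      by (simp add: mult.assoc)
  qed
qed

lemma parts_sum_prod:
  fixes h :: "nat set \<Rightarrow> 'b::comm_semiring_1"
  assumes x: "x \<notin> X" and fX: "finite X"
  shows "(\<Sum>P\<in>parts (Suc k) (insert x X). (\<Prod>b\<in>P. h b)) =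
    (\<Sum>c\<in>Ssub k X. h (insert x c) * (\<Sum>P'\<in>parts (Suc k) (X - c). (\<Prod>b\<in>P'. h b)))"
  using parts_sum_prodG[OF x fX, where G="\<lambda>_. 1" and h=h and k=k] by simp

lemma parts_sum_empty: "(\<Sum>P\<in>parts (Suc k) {}. g P) = g {}"
  by (simp add: parts_empty)

lemma Ssub_0: "finite X \<Longrightarrow> Ssub 0 X = {{}}"
  unfolding Ssub_def by (auto simp: card_eq_0_iff dest: finite_subset)

lemma Ssub_Suc_empty: "Ssub (Suc k) {} = {}"
  unfolding Ssub_def by auto

lemma Ssub_Suc_insert:
  assumes y: "y \<notin> Y" and fY: "finite Y"
  shows "Ssub (Suc k) (insert y Y) = insert y ` Ssub k Y \<union> Ssub (Suc k) Y"
proof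
  show "Ssub (Suc k) (insert y Y) \<subseteq> insert y ` Ssub k Y \<union> Ssub (Suc k) Y"
  proof
    fix c assume "c \<in> Ssub (Suc k) (insert y Y)"
    then have c: "c \<subseteq> insert y Y" "card c = Suc k" unfolding Ssub_def by auto
    have fc: "finite c" using c fY finite_subset by blast
    show "c \<in> insert y ` Ssub k Y \<union> Ssub (Suc k) Y"
    proof (cases "y \<in> c")
      case True
      then have "c = insert y (c - {y})" "c - {y} \<subseteq> Y" "card (c - {y}) = k" using c fc by auto
      then show ?thesis unfolding Ssub_def by blast
    next
      case False
      then show ?thesis using c unfolding Ssub_def by auto
    qed
  qed
next
  show "insert y ` Ssub k Y \<union> Ssub (Suc k) Y \<subseteq> Ssub (Suc k) (insert y Y)"
  proof
    fix c assume "c \<in> insert y ` Ssub k Y \<union> Ssub (Suc k) Y"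
    then show "c \<in> Ssub (Suc k) (insert y Y)"
    proof
      assume "c \<in> insert y ` Ssub k Y"
      then obtain d where d: "d \<subseteq> Y" "card d = k" "c = insert y d" unfolding Ssub_def by auto
      have "finite d" using d fY finite_subset by blast
      moreover have "y \<notin> d" using d y by auto
      ultimately show ?thesis using d unfolding Ssub_def by auto
    next
      assume "c \<in> Ssub (Suc k) Y" then show ?thesis unfolding Ssub_def by auto
    qed
  qed
qed

lemma Ssub_Suc_aux:
  assumes y: "y \<notin> Y" and fY: "finite Y"
  shows "finite (insert y ` Ssub k Y)" "finite (Ssub (Suc k) Y)"
    "insert y ` Ssub k Y \<inter> Ssub (Suc k) Y = {}" "inj_on (insert y) (Ssub k Y)"
proof -
  show "finite (insert y ` Ssub k Y)" "finite (Ssub (Suc k) Y)" unfolding Ssub_def using fY by auto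
  show "insert y ` Ssub k Y \<inter> Ssub (Suc k) Y = {}" using y unfolding Ssub_def by auto
  show "inj_on (insert y) (Ssub k Y)"
  proof (rule inj_onI)
    fix a b assume ab: "a \<in> Ssub k Y" "b \<in> Ssub k Y" "insert y a = insert y b"
    then have "y \<notin> a" "y \<notin> b" using y unfolding Ssub_def by auto
    then show "a = b" using ab(3) by (metis Diff_insert_absorb)
  qed
qed

lemma Ssub_sum_insert:
  assumes y: "y \<notin> Y" and fY: "finite Y"
  shows "(\<Sum>c\<in>Ssub (Suc k) (insert y Y). f c) = (\<Sum>c\<in>Ssub k Y. f (insert y c)) + (\<Sum>c\<in>Ssub (Suc k) Y. f c)"
  unfolding Ssub_Suc_insert[OF y fY]
  using Ssub_Suc_aux[OF y fY, of k]
  by (simp add: sum.union_disjoint sum.reindex)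

lemma Ssub_prod_insert:
  assumes y: "y \<notin> Y" and fY: "finite Y"
  shows "(\<Prod>c\<in>Ssub (Suc k) (insert y Y). f c) = (\<Prod>c\<in>Ssub k Y. f (insert y c)) * (\<Prod>c\<in>Ssub (Suc k) Y. f c)"
  unfolding Ssub_Suc_insert[OF y fY]
  using Ssub_Suc_aux[OF y fY, of k]
  by (simp add: prod.union_disjoint prod.reindex)

lemma Ssub_sum_0: "finite X \<Longrightarrow> (\<Sum>c\<in>Ssub 0 X. f c) = f {}"
  by (simp add: Ssub_0)
lemma Ssub_prod_0: "finite X \<Longrightarrow> (\<Prod>c\<in>Ssub 0 X. f c) = f {}"
  by (simp add: Ssub_0)
lemma Ssub_sum_empty: "(\<Sum>c\<in>Ssub (Suc k) {}. f c) = 0"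
  by (simp add: Ssub_Suc_empty)
lemma Ssub_prod_empty: "(\<Prod>c\<in>Ssub (Suc k) {}. f c) = 1"
  by (simp add: Ssub_Suc_empty)



lemma Idx_eq: "Idx = {1,2,3,4,5,6}"
  unfolding Idx_def by auto

lemma polyD_eq: "polyD = (\<Prod>b\<in>Ssub (Suc (Suc 0)) {1,2,3,4,5,6}. Delta b)"
  unfolding polyD_def Ssub_def Idx_eq numeral_2_eq_2 ..

lemma D_TOT:
  fixes \<omega> :: "nat \<Rightarrow> real"
  assumes ord: "\<omega> 1 < \<omega> 2" "\<omega> 2 < \<omega> 3" "\<omega> 3 < \<omega> 4" "\<omega> 4 < \<omega> 5" "\<omega> 5 < \<omega> 6"
  shows "TOT \<omega> (polyD :: 'a::comm_ring_1 mpoly) [0,0,2,4,6,8,10] 1"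
  unfolding polyD_eq
  apply (simp add: Ssub_prod_insert Ssub_prod_0 Ssub_prod_empty del: One_nat_def)
  apply (rule TOT_cong)
  apply ((rule TOT_step TOT_last LEAD_mult LEAD_Delta | simp del: wtl.simps One_nat_def add: wtl7 uv_def | use ord in linarith)+)
  done



lemma bp_parts: "block_partitions k = parts k Idx"
  unfolding block_partitions_def parts_def ..

lemma polyA_eq: "polyA = (\<Sum>P\<in>parts (Suc (Suc 0)) {1,2,3,4,5,6}. \<Prod>b\<in>P. Delta b)"
  unfolding polyA_def pair_partitions_def bp_parts Idx_eq numeral_2_eq_2 ..

lemmas exp_simps = parts_sum_prod parts_sum_empty Ssub_sum_insert Ssub_sum_0 Ssub_sum_empty
  Ssub_prod_insert Ssub_prod_0 Ssub_prod_empty distrib_left distrib_right add.assoc insert_Diff_if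

lemma A_TOT:
  fixes \<omega> :: "nat \<Rightarrow> real"
  assumes ord: "\<omega> 1 < \<omega> 2" "\<omega> 2 < \<omega> 3" "\<omega> 3 < \<omega> 4" "\<omega> 4 < \<omega> 5" "\<omega> 5 < \<omega> 6"
  shows "TOT \<omega> (polyA :: 'a::comm_ring_1 mpoly) [0,0,0,0,2,2,2] 6"
  unfolding polyA_eq
  apply (simp add: exp_simps del: One_nat_def)
  apply (rule TOT_cong)
  apply ((rule TOT_step TOT_last LEAD_mult LEAD_Delta | simp del: wtl.simps One_nat_def add: wtl7 uv_def | use ord in linarith)+)
  done



lemma triDelta_eq: "triDelta T = (\<Prod>b\<in>Ssub (Suc (Suc 0)) T. Delta b)"
  unfolding triDelta_def Ssub_def numeral_2_eq_2 ..

lemma polyB_eq: "polyB = (\<Sum>P\<in>parts (Suc (Suc (Suc 0))) {1,2,3,4,5,6}. \<Prod>T\<in>P. \<Prod>b\<in>Ssub (Suc (Suc 0)) T. Delta b)"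
  unfolding polyB_def triple_partitions_def bp_parts Idx_eq numeral_3_eq_3 triDelta_eq ..

lemma B_TOT:
  fixes \<omega> :: "nat \<Rightarrow> real"
  assumes ord: "\<omega> 1 < \<omega> 2" "\<omega> 2 < \<omega> 3" "\<omega> 3 < \<omega> 4" "\<omega> 4 < \<omega> 5" "\<omega> 5 < \<omega> 6"
  shows "TOT \<omega> (polyB :: 'a::comm_ring_1 mpoly) [0,0,0,2,2,4,4] 4"
  unfolding polyB_eq
  apply (simp add: exp_simps del: One_nat_def)
  apply (rule TOT_cong)
  apply ((rule TOT_step TOT_last LEAD_mult LEAD_Delta | simp del: wtl.simps One_nat_def add: wtl7 uv_def | use ord in linarith)+)
  done



lemma pairings_sum:
  "(\<Sum>M\<in>pairings P. \<Prod>b\<in>M. (Delta b :: 'a::comm_ring_1 mpoly)) =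
   (\<Sum>M\<in>parts (Suc (Suc 0)) {1,2,3,4,5,6}. \<Prod>b\<in>M. (if \<forall>T\<in>P. card (b \<inter> T) = Suc 0 then Delta b else 0))"
proof -
  have pe: "pairings P = {M \<in> parts (Suc (Suc 0)) {1,2,3,4,5,6}. \<forall>m\<in>M. \<forall>T\<in>P. card (m \<inter> T) = Suc 0}"
    unfolding pairings_def pair_partitions_def bp_parts Idx_eq numeral_2_eq_2 by simp
  have fin: "finite (parts (Suc (Suc 0)) {1,2,3,4,5,6::nat})" by (simp add: finite_parts)
  show ?thesis unfolding pe sum.inter_filter[OF fin]
  proof (rule sum.cong[OF refl])
    fix M assume M: "M \<in> parts (Suc (Suc 0)) {1,2,3,4,5,6}"
    have fM: "finite M" by (rule parts_finite_elem[OF M]) simp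
    show "(if \<forall>m\<in>M. \<forall>T\<in>P. card (m \<inter> T) = Suc 0 then \<Prod>b\<in>M. Delta b else 0) =
      (\<Prod>b\<in>M. if \<forall>T\<in>P. card (b \<inter> T) = Suc 0 then Delta b else (0 :: 'a mpoly))"
    proof (cases "\<forall>m\<in>M. \<forall>T\<in>P. card (m \<inter> T) = Suc 0")
      case True then show ?thesis by (auto intro!: prod.cong)
    next
      case False
      then obtain m where "m \<in> M" "\<not> (\<forall>T\<in>P. card (m \<inter> T) = Suc 0)" by blast
      then have z: "(\<Prod>b\<in>M. if \<forall>T\<in>P. card (b \<inter> T) = Suc 0 then Delta b else (0 :: 'a mpoly)) = 0"
        using fM by (intro prod_zero) auto
      show ?thesis unfolding if_not_P[OF False] z ..
    qed
  qed
qed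

lemma polyC_eq: "(polyC :: 'a::comm_ring_1 mpoly) = (\<Sum>P\<in>parts (Suc (Suc (Suc 0))) {1,2,3,4,5,6}.
   (\<Prod>T\<in>P. \<Prod>b\<in>Ssub (Suc (Suc 0)) T. Delta b) *
   (\<Sum>M\<in>parts (Suc (Suc 0)) {1,2,3,4,5,6}. \<Prod>b\<in>M. (if \<forall>T\<in>P. card (b \<inter> T) = Suc 0 then Delta b else 0)))"
  unfolding polyC_def sum_distrib_left[symmetric] pairings_sum
  unfolding triple_partitions_def bp_parts Idx_eq numeral_3_eq_3 triDelta_eq ..

lemmas exp0_simps = parts_sum_prod parts_sum_empty Ssub_sum_insert Ssub_sum_0 Ssub_sum_empty
  Ssub_prod_insert Ssub_prod_0 Ssub_prod_empty insert_Diff_if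

lemma C_TOT:
  fixes \<omega> :: "nat \<Rightarrow> real"
  assumes ord: "\<omega> 1 < \<omega> 2" "\<omega> 2 < \<omega> 3" "\<omega> 3 < \<omega> 4" "\<omega> 4 < \<omega> 5" "\<omega> 5 < \<omega> 6"
  shows "TOT \<omega> (polyC :: 'a::comm_ring_1 mpoly) [0,0,0,2,4,6,6] 8"
  unfolding polyC_eq
  apply (simp add: exp0_simps parts_sum_prodG Int_insert_left del: One_nat_def)
  apply (simp add: exp_simps Int_insert_left del: One_nat_def)
  apply (rule TOT_cong)
  apply ((rule TOT_step TOT_last LEAD_mult LEAD_Delta | simp del: wtl.simps One_nat_def add: wtl7 uv_def | use ord in linarith)+)
  done


lemma Var_pow: "(Var i :: 'a::comm_ring_1 mpoly) ^ n = Poly_Mapping.single (Poly_Mapping.single i n) 1"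
proof (induction n)
  case 0 then show ?case by simp
next
  case (Suc n)
  have "(Var i :: 'a mpoly) ^ Suc n = Var i * Var i ^ n" by simp
  also have "\<dots> = Var i * Poly_Mapping.single (Poly_Mapping.single i n) 1" using Suc.IH by simp
  also have "\<dots> = Poly_Mapping.single (Poly_Mapping.single i 1 + Poly_Mapping.single i n) 1"
    unfolding Var_def by (simp add: mult_single)
  also have "Poly_Mapping.single i 1 + Poly_Mapping.single i n = Poly_Mapping.single i (Suc n)"
    by (simp add: single_add[symmetric])
  finally show ?case .
qed

lemma monf7: "monf 0 [a0,a1,a2,a3,a4,a5,a6] = Poly_Mapping.single 0 a0 + Poly_Mapping.single 1 a1 + Poly_Mapping.single 2 a2 + Poly_Mapping.single 3 a3 + Poly_Mapping.single 4 a4 + Poly_Mapping.single 5 a5 + Poly_Mapping.single 6 a6"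
  by (simp add: numeral_eq_Suc add.assoc)

lemma mono_single: "(numeral k :: 'a::comm_ring_1 mpoly) * Poly_Mapping.single m 1 = Poly_Mapping.single m (numeral k)"
  by (simp add: single_numeral[symmetric] mult_single del: single_numeral)

lemma single1_mult: "Poly_Mapping.single a (1::'a::comm_ring_1) * Poly_Mapping.single b 1 = Poly_Mapping.single (a + b) 1"
  by (simp add: mult_single)

theorem lemma7p5:
  fixes \<omega> :: "nat \<Rightarrow> real"
  assumes char2: "(2::'a::field) \<noteq> 0" and char3: "(3::'a) \<noteq> 0"
    and ord: "\<omega> 1 < \<omega> 2" "\<omega> 2 < \<omega> 3" "\<omega> 3 < \<omega> 4" "\<omega> 4 < \<omega> 5" "\<omega> 5 < \<omega> 6"
  shows "(initial_form \<omega> (polyA :: 'a mpoly) = 6 * Var 4 ^ 2 * Var 5 ^ 2 * Var 6 ^ 2)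
    \<and> (initial_form \<omega> (polyB :: 'a mpoly) = 4 * Var 3 ^ 2 * Var 4 ^ 2 * Var 5 ^ 4 * Var 6 ^ 4)
    \<and> (initial_form \<omega> (polyC :: 'a mpoly) = 8 * Var 3 ^ 2 * Var 4 ^ 4 * Var 5 ^ 6 * Var 6 ^ 6)
    \<and> (initial_form \<omega> (polyD :: 'a mpoly) =
           Var 2 ^ 2 * Var 3 ^ 4 * Var 4 ^ 6 * Var 5 ^ 8 * Var 6 ^ 10)"
proof (intro conjI)
  have n6: "(6::'a) \<noteq> 0"
    using no_zero_divisors[OF char2 char3] by simp
  have n4: "(4::'a) \<noteq> 0"
    using no_zero_divisors[OF char2 char2] by simp
  have n8: "(8::'a) \<noteq> 0"
    using no_zero_divisors[OF no_zero_divisors[OF char2 char2] char2] by simp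
  show "initial_form \<omega> (polyA :: 'a mpoly) = 6 * Var 4 ^ 2 * Var 5 ^ 2 * Var 6 ^ 2"
    unfolding TOT_initial[OF A_TOT[OF ord] n6]
    by (simp del: monf.simps add: monf7 Var_pow mult.assoc mult_single add.assoc mono_single)
  show "initial_form \<omega> (polyB :: 'a mpoly) = 4 * Var 3 ^ 2 * Var 4 ^ 2 * Var 5 ^ 4 * Var 6 ^ 4"
    unfolding TOT_initial[OF B_TOT[OF ord] n4]
    by (simp del: monf.simps add: monf7 Var_pow mult.assoc mult_single add.assoc mono_single)
  show "initial_form \<omega> (polyC :: 'a mpoly) = 8 * Var 3 ^ 2 * Var 4 ^ 4 * Var 5 ^ 6 * Var 6 ^ 6"
    unfolding TOT_initial[OF C_TOT[OF ord] n8]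
    by (simp del: monf.simps add: monf7 Var_pow mult.assoc mult_single add.assoc mono_single)
  show "initial_form \<omega> (polyD :: 'a mpoly) = Var 2 ^ 2 * Var 3 ^ 4 * Var 4 ^ 6 * Var 5 ^ 8 * Var 6 ^ 10"
    unfolding TOT_initial[OF D_TOT[OF ord] one_neq_zero]
    by (simp del: monf.simps add: monf7 Var_pow mult.assoc mult_single add.assoc)
qed

end
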